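(* Let $C=\mathbb{S}^1\times\mathbb{R}$ be the flat Euclidean cylinder and $f:C\to C$ a geodesic-preserving bijection. Then $f$ maps horizontal geodesics to horizontal geodesics.
   Context: $C$ carries the product of the flat metric on $\mathbb{S}^1=\mathbb{R}/\mathbb{Z}$ and the standard metric on $\mathbb{R}$. A geodesic is the image of a locally isometric immersion of the whole real line; a bijection (not assumed continuous) is geodesic-preserving if it maps every geodesic onto a geodesic as a set. Horizontal geodesics are the circles $\mathbb{S}^1\times\{r\}$. *)

theory Defs
  imports "HOL-Analysis.Analysis"
begin

text \<open>The flat cylinder C = S^1 x R with S^1 = R/Z, modelled by the fundamental
domain [0,1) x R; the point (x,y) stands for the class of x in R/Z and height y.\<close>

definition cyl :: "(real \<times> real) set" where
  "cyl = {0..<1} \<times> UNIV"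

definition circ_dist :: "real \<Rightarrow> real \<Rightarrow> real" where
  "circ_dist a b = \<bar>(a - b) - of_int (round (a - b))\<bar>"

definition cyl_dist :: "real \<times> real \<Rightarrow> real \<times> real \<Rightarrow> real" where
  "cyl_dist p q = sqrt ((circ_dist (fst p) (fst q))\<^sup>2 + (snd p - snd q)\<^sup>2)"

definition local_isometry :: "(real \<Rightarrow> real \<times> real) \<Rightarrow> bool" where
  "local_isometry \<gamma> \<longleftrightarrow> range \<gamma> \<subseteq> cyl \<and>
     (\<forall>t. \<exists>e>0. \<forall>s\<in>{t-e<..<t+e}. \<forall>s'\<in>{t-e<..<t+e}.
         cyl_dist (\<gamma> s) (\<gamma> s') = \<bar>s - s'\<bar>)"

definition geodesic :: "(real \<times> real) set \<Rightarrow> bool" where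
  "geodesic G \<longleftrightarrow> (\<exists>\<gamma>. local_isometry \<gamma> \<and> G = range \<gamma>)"

definition horizontal :: "real \<Rightarrow> (real \<times> real) set" where
  "horizontal r = {0..<1} \<times> {r}"

definition geodesic_preserving :: "(real \<times> real \<Rightarrow> real \<times> real) \<Rightarrow> bool" where
  "geodesic_preserving f \<longleftrightarrow> (\<forall>G. geodesic G \<longrightarrow> geodesic (f ` G))"

end

theory Submission
  imports Defs
begin


definition F :: "real \<Rightarrow> real \<Rightarrow> real \<Rightarrow> real \<Rightarrow> real \<Rightarrow> real \<times> real" where
  "F \<alpha> \<beta> a b = (\<lambda>s. (frac (\<alpha> + s * a), \<beta> + s * b))"

definition slanted :: "real \<Rightarrow> real \<Rightarrow> (real \<times> real) set" where
  "slanted c m = range (\<lambda>y. (frac (c + m * y), y))"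

lemma round_near:
  fixes d :: real assumes "\<bar>d\<bar> < 1/2" shows "round (of_int k + d) = k"
  using assms by (intro round_unique') simp

lemma circ_frac:
  assumes "\<bar>x - x'\<bar> < 1/2" shows "circ_dist (frac x) (frac x') = \<bar>x - x'\<bar>"
proof -
  have e: "frac x - frac x' = of_int (- (\<lfloor>x\<rfloor> - \<lfloor>x'\<rfloor>)) + (x - x')"
    by (simp add: frac_def)
  have "round (frac x - frac x') = - (\<lfloor>x\<rfloor> - \<lfloor>x'\<rfloor>)"
    unfolding e using assms by (rule round_near)
  then show ?thesis unfolding circ_dist_def e by simp
qed

lemma line_iso:
  assumes "a\<^sup>2 + b\<^sup>2 = 1" shows "local_isometry (F \<alpha> \<beta> a b)"
  unfolding local_isometry_def
proof (intro conjI allI)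
  show "range (F \<alpha> \<beta> a b) \<subseteq> cyl" by (auto simp: F_def cyl_def frac_lt_1)
  fix t
  have aa: "\<bar>a\<bar> \<le> 1" using assms
    by (metis abs_le_square_iff abs_one add_le_same_cancel1 le_add_same_cancel1 one_power2 zero_le_power2)
  show "\<exists>e>0. \<forall>s\<in>{t - e<..<t + e}. \<forall>s'\<in>{t - e<..<t + e}.
           cyl_dist (F \<alpha> \<beta> a b s) (F \<alpha> \<beta> a b s') = \<bar>s - s'\<bar>"
  proof (intro exI[of _ "1/4"] conjI ballI)
    fix s s' assume s: "s \<in> {t - 1/4<..<t + 1/4}" and s': "s' \<in> {t - 1/4<..<t + 1/4}"
    have "s - s' < 1/2" "s' - s < 1/2" using s s' by auto
    then have "\<bar>s - s'\<bar> < 1/2" by (intro abs_less_iff[THEN iffD2] conjI) linarith+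
    have "\<bar>(\<alpha> + s * a) - (\<alpha> + s' * a)\<bar> = \<bar>s - s'\<bar> * \<bar>a\<bar>"
      by (simp add: abs_mult[symmetric] algebra_simps)
    also have "\<dots> \<le> \<bar>s - s'\<bar>" using aa by (simp add: mult_left_le)
    finally have "\<bar>(\<alpha> + s * a) - (\<alpha> + s' * a)\<bar> < 1/2" using \<open>\<bar>s - s'\<bar> < 1/2\<close> by linarith
    from circ_frac[OF this] have c: "circ_dist (frac (\<alpha> + s * a)) (frac (\<alpha> + s' * a)) = \<bar>s - s'\<bar> * \<bar>a\<bar>"
      by (simp add: abs_mult[symmetric] algebra_simps)
    have "(\<bar>s - s'\<bar> * \<bar>a\<bar>)\<^sup>2 + (\<beta> + s * b - (\<beta> + s' * b))\<^sup>2 = (s - s')\<^sup>2 * (a\<^sup>2 + b\<^sup>2)"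
      by (simp add: power2_eq_square algebra_simps)
    then show "cyl_dist (F \<alpha> \<beta> a b s) (F \<alpha> \<beta> a b s') = \<bar>s - s'\<bar>"
      unfolding cyl_dist_def F_def using c assms by simp
  qed simp
qed

lemma range_F_hor:
  assumes "a\<^sup>2 = 1" shows "range (F \<alpha> \<beta> a 0) = horizontal \<beta>"
proof
  show "range (F \<alpha> \<beta> a 0) \<subseteq> horizontal \<beta>" by (auto simp: F_def horizontal_def frac_lt_1)
  have "a \<noteq> 0" using assms by auto
  show "horizontal \<beta> \<subseteq> range (F \<alpha> \<beta> a 0)"
  proof
    fix p assume "p \<in> horizontal \<beta>"
    then obtain x where x: "x \<in> {0..<1}" "p = (x, \<beta>)" by (auto simp: horizontal_def)
    have "F \<alpha> \<beta> a 0 ((x - \<alpha>) / a) = p" using x \<open>a \<noteq> 0\<close> by (simp add: F_def)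
    then show "p \<in> range (F \<alpha> \<beta> a 0)" by (metis rangeI)
  qed
qed

lemma range_F_sl:
  assumes "b \<noteq> 0" shows "range (F \<alpha> \<beta> a b) = slanted (\<alpha> - a * \<beta> / b) (a / b)"
proof -
  have "F \<alpha> \<beta> a b = (\<lambda>y. (frac ((\<alpha> - a * \<beta> / b) + (a / b) * y), y)) \<circ> (\<lambda>s. \<beta> + s * b)"
  proof -
    have eq: "(\<alpha> - a * \<beta> / b) + (a / b) * (\<beta> + s * b) = \<alpha> + s * a" for s
      using assms by (simp add: field_simps)
    show ?thesis by (simp only: F_def comp_def eq)
  qed
  moreover have "range (\<lambda>s. \<beta> + s * b) = UNIV"
  proof -
    have "\<beta> + ((y - \<beta>) / b) * b = y" for y using assms by simp
    then show ?thesis by (metis UNIV_eq_I rangeI)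
  qed
  ultimately show ?thesis unfolding slanted_def by (simp only: image_comp[symmetric])
qed



lemma collinear3:
  fixes P :: "real \<Rightarrow> real \<times> real"
  assumes "norm (P q - P p) = q - p" "norm (P r - P q) = r - q" "norm (P r - P p) = r - p"
  shows "(q - p) * (fst (P r) - fst (P q)) = (r - q) * (fst (P q) - fst (P p))"
    "(q - p) * (snd (P r) - snd (P q)) = (r - q) * (snd (P q) - snd (P p))"
proof -
  have "norm ((P q - P p) + (P r - P q)) = norm (P q - P p) + norm (P r - P q)"
    using assms by simp
  then have "norm (P q - P p) *\<^sub>R (P r - P q) = norm (P r - P q) *\<^sub>R (P q - P p)"
    by (simp only: norm_triangle_eq)
  then have v: "(q - p) *\<^sub>R (P r - P q) = (r - q) *\<^sub>R (P q - P p)" using assms by simp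
  show "(q - p) * (fst (P r) - fst (P q)) = (r - q) * (fst (P q) - fst (P p))"
    using arg_cong[OF v, of fst] by simp
  show "(q - p) * (snd (P r) - snd (P q)) = (r - q) * (snd (P q) - snd (P p))"
    using arg_cong[OF v, of snd] by simp
qed

lemma lin3:
  fixes p q r yp yq yr :: real
  assumes "(q-p)*(yr-yq) = (r-q)*(yq-yp)"
  shows "(q-p)*(yr-yp) = (r-p)*(yq-yp)"
proof -
  have "(q-p)*(yr-yp) = (q-p)*(yr-yq) + (q-p)*(yq-yp)" by (simp add: algebra_simps)
  also have "\<dots> = (r-q)*(yq-yp) + (q-p)*(yq-yp)" using assms by simp
  also have "\<dots> = (r-p)*(yq-yp)" by (simp add: algebra_simps)
  finally show ?thesis .
qed

lemma iso_affine:
  fixes U v :: "real \<Rightarrow> real"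
  assumes e: "e > 0"
    and iso: "\<forall>s\<in>{t-e<..<t+e}. \<forall>s'\<in>{t-e<..<t+e}. sqrt ((U s - U s')\<^sup>2 + (v s - v s')\<^sup>2) = \<bar>s - s'\<bar>"
  shows "\<exists>a b. a\<^sup>2 + b\<^sup>2 = 1 \<and> (\<forall>s\<in>{t-e<..<t+e}. U s = U t + (s - t) * a \<and> v s = v t + (s - t) * b)"
proof -
  define P where "P s = (U s, v s)" for s
  have N: "norm (P s - P s') = \<bar>s - s'\<bar>" if "s \<in> {t-e<..<t+e}" "s' \<in> {t-e<..<t+e}" for s s'
    using iso that by (simp add: P_def norm_Pair)
  have N': "norm (P s' - P s) = s' - s" if "s \<in> {t-e<..<t+e}" "s' \<in> {t-e<..<t+e}" "s \<le> s'" for s s'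
    using N[OF that(2,1)] that(3) by simp
  define h where "h = e / 2"
  define s1 where "s1 = t + h"
  have h: "h > 0" "s1 - t = h" using e by (auto simp: h_def s1_def)
  have It: "t \<in> {t-e<..<t+e}" and I1: "s1 \<in> {t-e<..<t+e}" using e by (auto simp: s1_def h_def)
  define a where "a = (U s1 - U t) / h"
  define b where "b = (v s1 - v t) / h"
  have "sqrt ((U s1 - U t)\<^sup>2 + (v s1 - v t)\<^sup>2) = h" using iso It I1 h by auto
  then have "(U s1 - U t)\<^sup>2 + (v s1 - v t)\<^sup>2 = h\<^sup>2"
    by (metis real_sqrt_pow2 add_nonneg_nonneg zero_le_power2)
  then have ab: "a\<^sup>2 + b\<^sup>2 = 1" using h by (simp add: a_def b_def power_divide field_simps)
  have "U s = U t + (s - t) * a \<and> v s = v t + (s - t) * b" if s: "s \<in> {t-e<..<t+e}" for s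
  proof -
    consider "s = t" | "t < s" "s < s1" | "s = s1" | "s1 < s" | "s < t" by linarith
    then have "h * (U s - U t) = (s - t) * (U s1 - U t) \<and> h * (v s - v t) = (s - t) * (v s1 - v t)"
    proof cases
      case 1 then show ?thesis by simp
    next
      case 2
      note ord = this
      note c = collinear3[of P s t s1, OF N'[OF It s] N'[OF s I1] N'[OF It I1]]
      have c1: "(s-t)*(U s1 - U t) = (s1-t)*(U s - U t)" using lin3[OF c(1)] h ord by (auto simp: P_def)
      have c2: "(s-t)*(v s1 - v t) = (s1-t)*(v s - v t)" using lin3[OF c(2)] h ord by (auto simp: P_def)
      show ?thesis using c1 c2 h(2) by simp
    next
      case 3 then show ?thesis using h by simp
    next
      case 4
      note ord = this
      note c = collinear3[of P s1 t s, OF N'[OF It I1] N'[OF I1 s] N'[OF It s]]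
      have c1: "(s1-t)*(U s - U t) = (s-t)*(U s1 - U t)" using lin3[OF c(1)] h ord by (auto simp: P_def)
      have c2: "(s1-t)*(v s - v t) = (s-t)*(v s1 - v t)" using lin3[OF c(2)] h ord by (auto simp: P_def)
      show ?thesis using c1 c2 h(2) by simp
    next
      case 5
      note ord = this
      note c = collinear3[of P t s s1, OF N'[OF s It] N'[OF It I1] N'[OF s I1]]
      have c1: "(t-s)*(U s1 - U t) = (s1-t)*(U t - U s)" using c(1) ord h by (auto simp: P_def)
      have c2: "(t-s)*(v s1 - v t) = (s1-t)*(v t - v s)" using c(2) ord h by (auto simp: P_def)
      have "h*(U s - U t) = (s-t)*(U s1 - U t)" using c1 h(2) by (simp add: algebra_simps)
      moreover have "h*(v s - v t) = (s-t)*(v s1 - v t)" using c2 h(2) by (simp add: algebra_simps)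
      ultimately show ?thesis by simp
    qed
    then show ?thesis using h by (auto simp: a_def b_def field_simps)
  qed
  then show ?thesis using ab by blast
qed



lemma circ_le_cyl: "circ_dist (fst p) (fst q) \<le> cyl_dist p q"
proof -
  have "circ_dist (fst p) (fst q) = sqrt ((circ_dist (fst p) (fst q))\<^sup>2)"
    by (simp add: circ_dist_def)
  also have "\<dots> \<le> cyl_dist p q" unfolding cyl_dist_def by (intro real_sqrt_le_mono) simp
  finally show ?thesis .
qed

lemma local_form:
  assumes "local_isometry \<gamma>"
  shows "\<exists>e>0. \<exists>\<alpha> \<beta> a b. a\<^sup>2 + b\<^sup>2 = 1 \<and> (\<forall>s\<in>{t-e<..<t+e}. \<gamma> s = F \<alpha> \<beta> a b s)"
proof -
  from assms obtain e0 where e0: "e0 > 0" and iso0: "\<forall>s\<in>{t-e0<..<t+e0}. \<forall>s'\<in>{t-e0<..<t+e0}.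
         cyl_dist (\<gamma> s) (\<gamma> s') = \<bar>s - s'\<bar>" unfolding local_isometry_def by blast
  have rng: "fst (\<gamma> s) \<in> {0..<1}" for s using assms unfolding local_isometry_def cyl_def
    by (metis SigmaE2 prod.collapse range_subsetD)
  define e where "e = min e0 (1/8)"
  have e: "e > 0" using e0 by (simp add: e_def)
  have iso: "cyl_dist (\<gamma> s) (\<gamma> s') = \<bar>s - s'\<bar>" if "s \<in> {t-e<..<t+e}" "s' \<in> {t-e<..<t+e}" for s s'
  proof -
    have "e \<le> e0" by (simp add: e_def)
    then have "s \<in> {t-e0<..<t+e0}" "s' \<in> {t-e0<..<t+e0}" using that by auto
    then show ?thesis using iso0 by blast
  qed
  define u where "u s = fst (\<gamma> s)" for s
  define v where "v s = snd (\<gamma> s)" for s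
  define k where "k s = round (u s - u t)" for s
  define U where "U s = u t + ((u s - u t) - of_int (k s))" for s
  have It: "t \<in> {t-e<..<t+e}" using e by simp
  have small: "\<bar>U s - u t\<bar> < 1/8" if s: "s \<in> {t-e<..<t+e}" for s
  proof -
    have "\<bar>U s - u t\<bar> = circ_dist (u s) (u t)" by (simp add: U_def k_def circ_dist_def)
    also have "\<dots> \<le> \<bar>s - t\<bar>" using circ_le_cyl[of "\<gamma> s" "\<gamma> t"] iso[OF s It] by (simp add: u_def)
    also have "\<dots> < 1/8"
    proof -
      have "e \<le> 1/8" by (simp add: e_def)
      then have "s - t < 1/8" "t - s < 1/8" using s by auto
      then show ?thesis by (intro abs_less_iff[THEN iffD2] conjI) linarith+
    qed
    finally show ?thesis .
  qed
  have key: "sqrt ((U s - U s')\<^sup>2 + (v s - v s')\<^sup>2) = \<bar>s - s'\<bar>"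
    if s: "s \<in> {t-e<..<t+e}" and s': "s' \<in> {t-e<..<t+e}" for s s'
  proof -
    have w: "u s - u s' = of_int (k s - k s') + (U s - U s')" by (simp add: U_def)
    have d1: "U s - u t < 1/8 \<and> -(U s - u t) < 1/8" using small[OF s] by (simp only: abs_less_iff)
    have d2: "U s' - u t < 1/8 \<and> -(U s' - u t) < 1/8" using small[OF s'] by (simp only: abs_less_iff)
    have d: "\<bar>U s - U s'\<bar> < 1/2" using d1 d2 by (intro abs_less_iff[THEN iffD2] conjI) linarith+
    have "round (u s - u s') = k s - k s'" unfolding w using d by (rule round_near)
    then have "circ_dist (u s) (u s') = \<bar>U s - U s'\<bar>" unfolding circ_dist_def w by simp
    then show ?thesis using iso[OF s s'] by (simp add: cyl_dist_def u_def v_def)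
  qed
  obtain a b where ab: "a\<^sup>2 + b\<^sup>2 = 1"
    and aff: "\<forall>s\<in>{t-e<..<t+e}. U s = U t + (s - t) * a \<and> v s = v t + (s - t) * b"
    using iso_affine[OF e, where U=U and v=v and t=t] key by blast
  have Ut: "U t = u t" by (simp add: U_def k_def)
  have "\<gamma> s = F (u t - t * a) (v t - t * b) a b s" if s: "s \<in> {t-e<..<t+e}" for s
  proof -
    have "frac (U s) = u s" unfolding frac_unique_iff
      using rng[of s] by (simp add: U_def u_def)
    moreover have "U s = u t - t * a + s * a" using aff s Ut by (simp add: algebra_simps)
    ultimately have "u s = frac (u t - t * a + s * a)" by simp
    moreover have "v s = v t - t * b + s * b" using aff s by (simp add: algebra_simps)
    ultimately show ?thesis by (simp add: F_def u_def v_def prod_eq_iff)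
  qed
  then show ?thesis using e ab by blast
qed



lemma agree:
  assumes d: "d > 0" and eq: "\<forall>s\<in>{c-d<..<c+d}. F \<alpha> \<beta> a b s = F \<alpha>' \<beta>' a' b' s"
  shows "F \<alpha> \<beta> a b = F \<alpha>' \<beta>' a' b'"
proof -
  have c: "c \<in> {c-d<..<c+d}" and c2: "c + d/2 \<in> {c-d<..<c+d}" using d by auto
  have e1: "\<beta> + c * b = \<beta>' + c * b'" and e2: "\<beta> + (c + d/2) * b = \<beta>' + (c + d/2) * b'"
    using eq c c2 by (auto simp: F_def)
  have "(d/2) * b = (\<beta> + (c + d/2) * b) - (\<beta> + c * b)" by (simp add: algebra_simps)
  also have "\<dots> = (\<beta>' + (c + d/2) * b') - (\<beta>' + c * b')" using e1 e2 by simp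
  also have "\<dots> = (d/2) * b'" by (simp add: algebra_simps)
  finally have "(d/2) * b = (d/2) * b'" .
  then have bb: "b = b'" using d by simp
  then have bb2: "\<beta> = \<beta>'" using e1 by simp
  have fr: "frac (\<alpha> + s * a) = frac (\<alpha>' + s * a')" if "s \<in> {c-d<..<c+d}" for s
    using eq that by (auto simp: F_def)
  from fr[OF c] obtain n0 where n0: "\<alpha> + c * a = \<alpha>' + c * a' + of_int n0" by (rule frac_eqE)
  have aa: "a = a'"
  proof (rule ccontr)
    assume ne: "a \<noteq> a'"
    define D where "D = \<bar>a - a'\<bar>"
    have D: "D > 0" using ne by (simp add: D_def)
    define \<delta> where "\<delta> = min (1/2) (d * D / 2)"
    have \<delta>: "0 < \<delta>" "\<delta> < 1" "\<delta> \<le> d * D / 2" using d D by (auto simp: \<delta>_def)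
    define s where "s = c + \<delta> / (a - a')"
    have "\<bar>s - c\<bar> = \<delta> / D" using \<delta> by (simp add: s_def D_def abs_divide)
    also have "\<dots> \<le> d / 2" using \<delta> D by (simp add: divide_le_eq mult.commute)
    also have "\<dots> < d" using d by simp
    finally have "s \<in> {c-d<..<c+d}" by (auto simp: abs_less_iff)
    from fr[OF this] obtain n where n: "\<alpha> + s * a = \<alpha>' + s * a' + of_int n" by (rule frac_eqE)
    have "(s - c) * (a - a') = \<delta>" using ne by (simp add: s_def)
    then have "of_int n = of_int n0 + \<delta>" using n n0 by (simp add: algebra_simps)
    then have "of_int n0 < (of_int n :: real)" "(of_int n :: real) < of_int n0 + 1" using \<delta> by auto
    then have "n0 < n" "n < n0 + 1" by linarith+
    then show False by linarith
  qed
  have "frac (\<alpha> + s * a) = frac (\<alpha>' + s * a')" for s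
  proof -
    have "\<alpha> + s * a = (\<alpha>' + s * a') + of_int n0" using n0 aa by (simp add: algebra_simps)
    then show ?thesis by simp
  qed
  then show ?thesis using bb bb2 by (auto simp: F_def fun_eq_iff)
qed

lemma global_form:
  assumes g: "local_isometry \<gamma>"
  shows "\<exists>\<alpha> \<beta> a b. a\<^sup>2 + b\<^sup>2 = 1 \<and> \<gamma> = F \<alpha> \<beta> a b"
proof -
  obtain e0 \<alpha> \<beta> a b where e0: "e0 > 0" and ab: "a\<^sup>2 + b\<^sup>2 = 1"
    and loc0: "\<forall>s\<in>{0-e0<..<0+e0}. \<gamma> s = F \<alpha> \<beta> a b s"
    using local_form[OF g, of 0] by blast
  define A where "A = {t. \<exists>d>0. \<forall>s\<in>{t-d<..<t+d}. \<gamma> s = F \<alpha> \<beta> a b s}"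
  have "0 \<in> A" using e0 loc0 by (auto simp: A_def)
  have oA: "open A" unfolding open_dist
  proof
    fix t assume "t \<in> A"
    then obtain d where d: "d > 0" "\<forall>s\<in>{t-d<..<t+d}. \<gamma> s = F \<alpha> \<beta> a b s" by (auto simp: A_def)
    show "\<exists>e>0. \<forall>y. dist y t < e \<longrightarrow> y \<in> A"
    proof (intro exI[of _ d] conjI allI impI)
      fix y assume "dist y t < d"
      then have "\<bar>y - t\<bar> < d" by (simp add: dist_real_def)
      then have "\<forall>s\<in>{y-(d - \<bar>y - t\<bar>)<..<y+(d - \<bar>y - t\<bar>)}. \<gamma> s = F \<alpha> \<beta> a b s"
        using d by (auto simp: abs_less_iff abs_if split: if_splits)
      then show "y \<in> A" using \<open>\<bar>y - t\<bar> < d\<close> unfolding A_def by (intro CollectI exI[of _ "d - \<bar>y - t\<bar>"]) auto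
    qed (use d in auto)
  qed
  have oB: "open (- A)" unfolding open_dist
  proof
    fix t assume "t \<in> - A"
    obtain e \<alpha>' \<beta>' a' b' where e: "e > 0"
      and loc: "\<forall>s\<in>{t-e<..<t+e}. \<gamma> s = F \<alpha>' \<beta>' a' b' s"
      using local_form[OF g, of t] by blast
    show "\<exists>e>0. \<forall>y. dist y t < e \<longrightarrow> y \<in> - A"
    proof (intro exI[of _ e] conjI allI impI)
      fix y assume "dist y t < e"
      then have yt: "\<bar>y - t\<bar> < e" by (simp add: dist_real_def)
      show "y \<in> - A"
      proof
        assume "y \<in> A"
        then obtain d where d: "d > 0" "\<forall>s\<in>{y-d<..<y+d}. \<gamma> s = F \<alpha> \<beta> a b s" by (auto simp: A_def)
        define r where "r = min d (e - \<bar>y - t\<bar>)"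
        have r: "r > 0" using d yt by (simp add: r_def)
        have "\<forall>s\<in>{y-r<..<y+r}. F \<alpha> \<beta> a b s = F \<alpha>' \<beta>' a' b' s"
        proof
          fix s assume s: "s \<in> {y-r<..<y+r}"
          have "r \<le> d" "r \<le> e - \<bar>y - t\<bar>" by (auto simp: r_def)
          then have "s \<in> {y-d<..<y+d}" "s \<in> {t-e<..<t+e}" using s by (auto simp: abs_less_iff abs_if split: if_splits)
          then show "F \<alpha> \<beta> a b s = F \<alpha>' \<beta>' a' b' s" using d loc by metis
        qed
        from agree[OF r this] have "F \<alpha> \<beta> a b = F \<alpha>' \<beta>' a' b'" .
        then have "t \<in> A" using e loc unfolding A_def by auto
        then show False using \<open>t \<in> - A\<close> by simp
      qed
    qed (use e in auto)
  qed
  have "closed A" using oB by (simp add: closed_def)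
  then have "A = UNIV" using oA clopen[of A] \<open>0 \<in> A\<close> by auto
  have "\<gamma> t = F \<alpha> \<beta> a b t" for t
  proof -
    have "t \<in> A" using \<open>A = UNIV\<close> by simp
    then obtain d where "d > 0" "\<forall>s\<in>{t-d<..<t+d}. \<gamma> s = F \<alpha> \<beta> a b s" by (auto simp: A_def)
    then show ?thesis by auto
  qed
  then show ?thesis using ab by blast
qed

lemma classify:
  assumes "geodesic G"
  shows "(\<exists>r. G = horizontal r) \<or> (\<exists>c m. G = slanted c m)"
proof -
  obtain \<gamma> where g: "local_isometry \<gamma>" "G = range \<gamma>" using assms by (auto simp: geodesic_def)
  obtain \<alpha> \<beta> a b where ab: "a\<^sup>2 + b\<^sup>2 = 1" "\<gamma> = F \<alpha> \<beta> a b" using global_form[OF g(1)] by blast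
  show ?thesis
  proof (cases "b = 0")
    case True
    then have "a\<^sup>2 = 1" using ab by simp
    then show ?thesis using range_F_hor[of a \<alpha> \<beta>] g ab True by auto
  next
    case False
    then show ?thesis using range_F_sl[OF False] g ab by auto
  qed
qed



lemma sl_sl:
  assumes "p \<in> slanted c1 m1" "p \<in> slanted c2 m2"
  shows "\<exists>q. q \<noteq> p \<and> q \<in> slanted c1 m1 \<and> q \<in> slanted c2 m2"
proof -
  obtain y where p: "p = (frac (c1 + m1 * y), y)" using assms(1) by (auto simp: slanted_def)
  have "p \<in> slanted c2 m2" by fact
  then have "frac (c1 + m1 * y) = frac (c2 + m2 * y)" using p by (auto simp: slanted_def)
  then obtain n where n: "c1 + m1 * y = c2 + m2 * y + of_int n" by (rule frac_eqE)
  show ?thesis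
  proof (cases "m1 = m2")
    case True
    define q where "q = (frac (c1 + m1 * (y+1)), y + 1)"
    have "c1 + m1 * (y+1) = c2 + m2 * (y+1) + of_int n" using n True by (simp add: algebra_simps)
    then have "frac (c1 + m1 * (y+1)) = frac (c2 + m2 * (y+1))" by simp
    then have "q \<in> slanted c1 m1" "q \<in> slanted c2 m2" unfolding q_def slanted_def by (auto intro!: image_eqI[of _ _ "y+1"])
    moreover have "q \<noteq> p" using p by (simp add: q_def)
    ultimately show ?thesis by blast
  next
    case False
    define y1 where "y1 = y + 1 / (m1 - m2)"
    define q where "q = (frac (c1 + m1 * y1), y1)"
    have h: "m1 * y1 = m1*y + m1/(m1-m2)" "m2*y1 = m2*y + m2/(m1-m2)" by (simp_all add: y1_def algebra_simps)
    have "m1 - m2 \<noteq> 0" using False by simp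
    then have h2: "m1/(m1-m2) = m2/(m1-m2) + 1" by (simp add: field_simps)
    have "c1 + m1 * y1 = c2 + m2 * y1 + of_int (n + 1)" using n h h2 by simp
    then have "frac (c1 + m1 * y1) = frac (c2 + m2 * y1)" by (simp del: of_int_add)
    then have "q \<in> slanted c1 m1" "q \<in> slanted c2 m2" unfolding q_def slanted_def by (auto intro!: image_eqI[of _ _ y1])
    moreover have "q \<noteq> p" using p False by (simp add: q_def y1_def)
    ultimately show ?thesis by blast
  qed
qed

lemma sl_hor: "p \<in> slanted c m \<Longrightarrow> q \<in> slanted c m \<Longrightarrow> p \<in> horizontal r \<Longrightarrow> q \<in> horizontal r \<Longrightarrow> p = q"
  by (auto simp: slanted_def horizontal_def)

lemma hor_hor: "p \<in> horizontal r \<Longrightarrow> p \<in> horizontal s \<Longrightarrow> r = s"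
  by (auto simp: horizontal_def)

lemma geo_cyl: "geodesic G \<Longrightarrow> G \<subseteq> cyl"
  by (auto simp: geodesic_def local_isometry_def)

lemma geo_hor: "geodesic (horizontal r)"
proof -
  have "local_isometry (F 0 r 1 0)" by (rule line_iso) simp
  moreover have "range (F 0 r 1 0) = horizontal r" by (rule range_F_hor) simp
  ultimately show ?thesis unfolding geodesic_def by metis
qed

lemma geo_V: "geodesic (slanted 0 0)"
proof -
  have "local_isometry (F 0 0 0 1)" by (rule line_iso) simp
  moreover have "range (F 0 0 0 1) = slanted 0 0" using range_F_sl[of 1 0 0 0] by simp
  ultimately show ?thesis unfolding geodesic_def by metis
qed

lemma geo_G: "geodesic (slanted 0 (3/4))"
proof -
  have "local_isometry (F 0 0 (3/5) (4/5))" by (rule line_iso) (simp add: power2_eq_square)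
  moreover have "range (F 0 0 (3/5) (4/5)) = slanted 0 (3/4)" using range_F_sl[of "4/5" 0 0 "3/5"] by simp
  ultimately show ?thesis unfolding geodesic_def by metis
qed

theorem lemma4p2:
  fixes f :: "real \<times> real \<Rightarrow> real \<times> real"
  assumes "bij_betw f cyl cyl"
    and "geodesic_preserving f"
  shows "\<forall>r. \<exists>r'. f ` horizontal r = horizontal r'"
proof
  fix r
  have inj: "inj_on f cyl" using assms(1) by (simp add: bij_betw_def)
  have gp: "geodesic (f ` G)" if "geodesic G" for G using assms(2) that by (simp add: geodesic_preserving_def)
  define H where "H = horizontal r"
  define V where "V = slanted 0 0"
  define G where "G = slanted 0 (3/4)"
  have gH: "geodesic H" "H \<subseteq> cyl" using geo_hor geo_cyl by (auto simp: H_def)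
  have gV: "geodesic V" "V \<subseteq> cyl" using geo_V geo_cyl by (auto simp: V_def)
  have gG: "geodesic G" "G \<subseteq> cyl" using geo_G geo_cyl by (auto simp: G_def)
  show "\<exists>r'. f ` horizontal r = horizontal r'"
  proof (rule ccontr)
    assume nh: "\<nexists>r'. f ` horizontal r = horizontal r'"
    then obtain c m where K: "f ` H = slanted c m" using classify[OF gp[OF gH(1)]] by (auto simp: H_def)
    have pH: "(0, r) \<in> H" and pV: "(0, r) \<in> V" by (auto simp: H_def V_def horizontal_def slanted_def)
    have HV: "\<And>q. q \<in> H \<Longrightarrow> q \<in> V \<Longrightarrow> q = (0, r)" by (auto simp: H_def V_def horizontal_def slanted_def)
    have fV: "\<exists>s. f ` V = horizontal s"
    proof (rule ccontr)
      assume "\<nexists>s. f ` V = horizontal s"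
      then obtain c' m' where K': "f ` V = slanted c' m'" using classify[OF gp[OF gV(1)]] by auto
      have "f (0, r) \<in> slanted c m" "f (0, r) \<in> slanted c' m'" using pH pV K K' by blast+
      then obtain q where q: "q \<noteq> f (0, r)" "q \<in> f ` H" "q \<in> f ` V" using sl_sl K K' by metis
      then obtain x where x: "x \<in> H" "q = f x" by auto
      obtain z where z: "z \<in> V" "q = f z" using q by auto
      have "x = z" using inj x z gH gV by (metis inj_on_def subsetD)
      then have "x = (0, r)" using HV x z by simp
      then show False using q x by simp
    qed
    then obtain s where fVs: "f ` V = horizontal s" by blast
    have p1: "(0, 0) \<in> V" "(0, 0) \<in> G" by (auto simp: V_def G_def slanted_def intro!: image_eqI[of _ _ 0])
    have p2: "(0, 4/3) \<in> V" "(0, 4/3) \<in> G" by (auto simp: V_def G_def slanted_def intro!: image_eqI[of _ _ "4/3"])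
    have ne: "f (0, 0) \<noteq> f (0, 4/3)"
    proof
      assume "f (0, 0) = f (0, 4/3)"
      then have "((0::real), (0::real)) = (0, 4/3)" using inj p1 p2 gV by (metis inj_on_def subsetD)
      then show False by simp
    qed
    have fG: "\<exists>s'. f ` G = horizontal s'"
    proof (rule ccontr)
      assume "\<nexists>s'. f ` G = horizontal s'"
      then obtain c' m' where K': "f ` G = slanted c' m'" using classify[OF gp[OF gG(1)]] by auto
      have "f (0, 0) = f (0, 4/3)"
        by (rule sl_hor[of _ c' m' _ s]) (use K' fVs p1 p2 in blast)+
      then show False using ne by simp
    qed
    then obtain s' where fGs: "f ` G = horizontal s'" by blast
    have "s' = s" using hor_hor[of "f (0,0)" s' s] fGs fVs p1 by blast
    then have "f ` G = f ` V" using fGs fVs by simp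
    then have "G = V" using inj gG gV by (simp add: inj_on_image_eq_iff)
    moreover have "(frac (3/4), 1) \<in> G" by (auto simp: G_def slanted_def intro!: image_eqI[of _ _ 1])
    moreover have "(frac (3/4), 1) \<notin> V"
    proof -
      have "frac (3/4 :: real) = 3/4" by (simp add: frac_eq)
      then show ?thesis by (simp add: V_def slanted_def image_iff)
    qed
    ultimately show False by simp
  qed
qed

end
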